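(* If $v_1$ and $v_2$ are symmetric submodular valuations on a finite set $X$, then $v_1\vee v_2$ is submodular (and symmetric).
   Context: A valuation on a finite set $X$ is a function $v:2^X\to\mathbb{R}_{\ge 0}$ with $v(\emptyset)=0$ and monotone under inclusion; it is symmetric if $v(S)$ depends only on $|S|$; it is submodular if $v(A)+v(B)\ge v(A\cup B)+v(A\cap B)$ for all $A,B\subseteq X$. $(v_1\vee v_2)(S)=\max_{T\subseteq S}(v_1(T)+v_2(S\setminus T))$. *)

theory Defs
  imports Complex_Main
begin

definition valuation :: "'a set \<Rightarrow> ('a set \<Rightarrow> real) \<Rightarrow> bool" where
  "valuation X v \<longleftrightarrow> v {} = 0 \<and> (\<forall>S\<subseteq>X. v S \<ge> 0)
     \<and> (\<forall>S T. S \<subseteq> T \<and> T \<subseteq> X \<longrightarrow> v S \<le> v T)"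

definition symmetric_val :: "'a set \<Rightarrow> ('a set \<Rightarrow> real) \<Rightarrow> bool" where
  "symmetric_val X v \<longleftrightarrow> (\<forall>S T. S \<subseteq> X \<and> T \<subseteq> X \<and> card S = card T \<longrightarrow> v S = v T)"

definition submodular :: "'a set \<Rightarrow> ('a set \<Rightarrow> real) \<Rightarrow> bool" where
  "submodular X v \<longleftrightarrow> (\<forall>A B. A \<subseteq> X \<and> B \<subseteq> X \<longrightarrow> v A + v B \<ge> v (A \<union> B) + v (A \<inter> B))"

definition val_join :: "('a set \<Rightarrow> real) \<Rightarrow> ('a set \<Rightarrow> real) \<Rightarrow> 'a set \<Rightarrow> real" where
  "val_join v1 v2 S = Max ((\<lambda>T. v1 T + v2 (S - T)) ` Pow S)"

end

theory Submission
  imports Defs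
begin

lemma incr_antitone:
  fixes F :: "nat \<Rightarrow> real" and n i j :: nat
  assumes loc: "\<And>k. k+2 \<le> n \<Longrightarrow> F k + F (k+2) \<le> 2 * F (k+1)"
  shows "i \<le> j \<Longrightarrow> j+1 \<le> n \<Longrightarrow> F (j+1) - F j \<le> F (i+1) - F i"
proof (induction j)
  case 0 then show ?case by simp
next
  case (Suc j)
  show ?case
  proof (cases "i = Suc j")
    case True then show ?thesis by simp
  next
    case False
    then have "i \<le> j" using Suc.prems by simp
    then have "F (j+1) - F j \<le> F (i+1) - F i" using Suc by simp
    moreover have "F j + F (j+2) \<le> 2 * F (j+1)" using loc Suc.prems by simp
    ultimately show ?thesis by (simp add: numeral_2_eq_2)
  qed
qed

lemma concave_gen:
  fixes F :: "nat \<Rightarrow> real" and n a a' b' b :: nat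
  assumes loc: "\<And>k. k+2 \<le> n \<Longrightarrow> F k + F (k+2) \<le> 2 * F (k+1)"
  shows "a \<le> a' \<Longrightarrow> a' \<le> b' \<Longrightarrow> b \<le> n \<Longrightarrow> a' + b' = a + b \<Longrightarrow> F a + F b \<le> F a' + F b'"
proof (induction "a' - a" arbitrary: a b)
  case 0
  then have "a' = a" "b' = b" by auto
  then show ?case by simp
next
  case (Suc t)
  then have lt: "a < a'" "b' < b" by auto
  have "F (a+1) + F (b-1) \<le> F a' + F b'"
    using Suc.hyps(1)[of "a+1" "b-1"] Suc.hyps(2) Suc.prems lt by auto
  moreover have "F (b-1+1) - F (b-1) \<le> F (a+1) - F a"
    using incr_antitone[OF loc, where n=n and i=a and j="b-1"] Suc.prems lt by auto
  moreover have "b - 1 + 1 = b" using lt by auto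
  ultimately show ?case by simp
qed

lemma concave_bal:
  fixes F :: "nat \<Rightarrow> real" and n a b p q :: nat
  assumes loc: "\<And>k. k+2 \<le> n \<Longrightarrow> F k + F (k+2) \<le> 2 * F (k+1)"
    and "a \<le> n" "b \<le> n" "p + q = a + b" "p \<le> q" "q \<le> p+1"
  shows "F a + F b \<le> F p + F q"
proof (cases "a \<le> b")
  case True
  then show ?thesis using concave_gen[OF loc, where n=n and a=a and a'=p and b'=q and b=b] assms by auto
next
  case False
  then show ?thesis using concave_gen[OF loc, where n=n and a=b and a'=p and b'=q and b=a] assms by auto
qed

lemma sym_rep:
  fixes v :: "'a set \<Rightarrow> real"
  assumes fin: "finite X" and sym: "symmetric_val X v"
  defines "f \<equiv> (\<lambda>k. v (SOME T. T \<subseteq> X \<and> card T = k))"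
  shows "S \<subseteq> X \<Longrightarrow> v S = f (card S)"
proof -
  assume S: "S \<subseteq> X"
  have ex: "\<exists>T. T \<subseteq> X \<and> card T = card S" using S by blast
  let ?T = "SOME T. T \<subseteq> X \<and> card T = card S"
  have "?T \<subseteq> X \<and> card ?T = card S" using someI_ex[OF ex] .
  then show "v S = f (card S)" using sym S unfolding symmetric_val_def f_def by metis
qed

lemma sym_loc:
  fixes v :: "'a set \<Rightarrow> real"
  assumes fin: "finite X" and sym: "symmetric_val X v" and sub: "submodular X v"
    and rep: "\<And>S. S \<subseteq> X \<Longrightarrow> v S = f (card S)"
  shows "k+2 \<le> card X \<Longrightarrow> f k + f (k+2) \<le> 2 * f (k+1)"
proof -
  assume k: "k+2 \<le> card X"
  obtain S where S: "S \<subseteq> X" "card S = k+2" using obtain_subset_with_card_n[OF k] by metis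
  have finS: "finite S" using S fin finite_subset by blast
  obtain a where a: "a \<in> S" using S by fastforce
  have "card (S - {a}) = k+1" using S a finS by simp
  then have "0 < card (S - {a})" by simp
  then have "S - {a} \<noteq> {}" using card_gt_0_iff by blast
  then obtain b where b: "b \<in> S - {a}" by blast
  have cA: "card (S - {a}) = k+1" using S a finS by simp
  have cB: "card (S - {b}) = k+1" using S b finS by simp
  have un: "(S - {a}) \<union> (S - {b}) = S" using b by auto
  have int: "(S - {a}) \<inter> (S - {b}) = S - {a,b}" by auto
  have c2: "card {a,b} = 2" using b by auto
  have cI: "card (S - {a,b}) = k" using S a b finS c2 by (simp add: card_Diff_subset)
  have sx: "S - {a} \<subseteq> X" "S - {b} \<subseteq> X" using S by auto
  have "v (S - {a}) + v (S - {b}) \<ge> v ((S - {a}) \<union> (S - {b})) + v ((S - {a}) \<inter> (S - {b}))"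
    using sub sx unfolding submodular_def by blast
  then have "v (S - {a}) + v (S - {b}) \<ge> v S + v (S - {a,b})"
    unfolding un int .
  moreover have "v (S - {a}) = f (k+1)" using rep[OF sx(1)] cA by simp
  moreover have "v (S - {b}) = f (k+1)" using rep[OF sx(2)] cB by simp
  moreover have "v S = f (k+2)" using rep S by auto
  moreover have "v (S - {a,b}) = f k" using rep[of "S - {a,b}"] S cI by auto
  ultimately show ?thesis by simp
qed

theorem proposition3:
  fixes X :: "'a set" and v1 v2 :: "'a set \<Rightarrow> real"
  assumes "finite X"
    and "valuation X v1" and "symmetric_val X v1" and "submodular X v1"
    and "valuation X v2" and "symmetric_val X v2" and "submodular X v2"
  shows "submodular X (val_join v1 v2) \<and> symmetric_val X (val_join v1 v2)"
proof -
  define n where "n = card X"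
  define f where "f = (\<lambda>k. v1 (SOME T. T \<subseteq> X \<and> card T = k))"
  define g where "g = (\<lambda>k. v2 (SOME T. T \<subseteq> X \<and> card T = k))"
  have rf: "\<And>S. S \<subseteq> X \<Longrightarrow> v1 S = f (card S)"
    using sym_rep[OF assms(1) assms(3)] f_def by simp
  have rg: "\<And>S. S \<subseteq> X \<Longrightarrow> v2 S = g (card S)"
    using sym_rep[OF assms(1) assms(6)] g_def by simp
  have lf: "\<And>k. k+2 \<le> n \<Longrightarrow> f k + f (k+2) \<le> 2 * f (k+1)"
    using sym_loc[OF assms(1) assms(3) assms(4) rf] n_def by blast
  have lg: "\<And>k. k+2 \<le> n \<Longrightarrow> g k + g (k+2) \<le> 2 * g (k+1)"
    using sym_loc[OF assms(1) assms(6) assms(7) rg] n_def by blast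
  define H where "H = (\<lambda>m. Max ((\<lambda>k. f k + g (m-k)) ` {..m}))"
  have HJ: "val_join v1 v2 S = H (card S)" if S: "S \<subseteq> X" for S
  proof -
    have finS: "finite S" using S assms(1) finite_subset by blast
    have "(\<lambda>T. v1 T + v2 (S - T)) ` Pow S = (\<lambda>k. f k + g (card S - k)) ` {..card S}"
    proof
      show "(\<lambda>T. v1 T + v2 (S - T)) ` Pow S \<subseteq> (\<lambda>k. f k + g (card S - k)) ` {..card S}"
      proof
        fix y assume "y \<in> (\<lambda>T. v1 T + v2 (S - T)) ` Pow S"
        then obtain T where T: "T \<subseteq> S" "y = v1 T + v2 (S - T)" by auto
        have "card (S - T) = card S - card T" using T finS by (simp add: card_Diff_subset finite_subset)
        moreover have "card T \<le> card S" using T finS card_mono by blast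
        moreover have "T \<subseteq> X" "S - T \<subseteq> X" using T S by auto
        ultimately have "y = f (card T) + g (card S - card T)" using T rf rg by simp
        then show "y \<in> (\<lambda>k. f k + g (card S - k)) ` {..card S}"
          using \<open>card T \<le> card S\<close> by auto
      qed
    next
      show "(\<lambda>k. f k + g (card S - k)) ` {..card S} \<subseteq> (\<lambda>T. v1 T + v2 (S - T)) ` Pow S"
      proof
        fix y assume "y \<in> (\<lambda>k. f k + g (card S - k)) ` {..card S}"
        then obtain k where k: "k \<le> card S" "y = f k + g (card S - k)" by auto
        obtain T where T: "T \<subseteq> S" "card T = k" using obtain_subset_with_card_n[OF k(1)] by metis
        have "card (S - T) = card S - k" using T finS by (simp add: card_Diff_subset finite_subset)
        moreover have "T \<subseteq> X" "S - T \<subseteq> X" using T S by auto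
        ultimately have "y = v1 T + v2 (S - T)" using T rf rg k by simp
        then show "y \<in> (\<lambda>T. v1 T + v2 (S - T)) ` Pow S" using T by auto
      qed
    qed
    then show ?thesis unfolding val_join_def H_def by simp
  qed
  have Hge: "f k + g (m - k) \<le> H m" if "k \<le> m" for k m
    unfolding H_def using that by (intro Max_ge) auto
  have Hin: "\<exists>k\<le>m. H m = f k + g (m - k)" for m
  proof -
    have "H m \<in> (\<lambda>k. f k + g (m-k)) ` {..m}" unfolding H_def by (intro Max_in) auto
    then show ?thesis by auto
  qed
  have lH: "H m + H (m+2) \<le> 2 * H (m+1)" if m: "m+2 \<le> n" for m
  proof -
    obtain k where k: "k \<le> m" "H m = f k + g (m - k)" using Hin by blast
    obtain j where j: "j \<le> m+2" "H (m+2) = f j + g (m + 2 - j)" using Hin by blast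
    define s where "s = k + j"
    define k1 where "k1 = s div 2"
    define k2 where "k2 = s - s div 2"
    have k12: "k1 + k2 = k + j" "k1 \<le> k2" "k2 \<le> k1 + 1" "k2 \<le> m+1"
      unfolding k1_def k2_def s_def using k j by auto
    have F: "f k + f j \<le> f k1 + f k2"
      using concave_bal[OF lf, where n=n and a=k and b=j and p=k1 and q=k2] k12 k j m by auto
    have G: "g (m - k) + g (m + 2 - j) \<le> g (m + 1 - k2) + g (m + 1 - k1)"
      using concave_bal[OF lg, where n=n and a="m - k" and b="m + 2 - j" and p="m + 1 - k2" and q="m + 1 - k1"] k12 k j m by auto
    have "f k1 + g (m + 1 - k1) \<le> H (m+1)" using Hge k12 by auto
    moreover have "f k2 + g (m + 1 - k2) \<le> H (m+1)" using Hge k12 by auto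
    ultimately show ?thesis using F G k j by simp
  qed
  show ?thesis
  proof
    show "submodular X (val_join v1 v2)"
      unfolding submodular_def
    proof (intro allI impI)
      fix A B assume AB: "A \<subseteq> X \<and> B \<subseteq> X"
      have finA: "finite A" and finB: "finite B" using AB assms(1) finite_subset by blast+
      have cu: "card A + card B = card (A \<union> B) + card (A \<inter> B)"
        using card_Un_Int[OF finA finB] .
      have c1: "card (A \<inter> B) \<le> card A" "card (A \<inter> B) \<le> card B"
        using finA finB by (simp_all add: card_mono)
      have c2: "card A \<le> card (A \<union> B)" "card B \<le> card (A \<union> B)"
        using finA finB by (simp_all add: card_mono)
      have c3: "card (A \<union> B) \<le> n" using AB assms(1) n_def by (simp add: card_mono)
      have "H (card (A \<inter> B)) + H (card (A \<union> B)) \<le> H (card A) + H (card B)"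
      proof (cases "card A \<le> card B")
        case True
        then show ?thesis using concave_gen[OF lH, where n=n and a="card (A \<inter> B)" and a'="card A" and b'="card B" and b="card (A \<union> B)"]
          cu c1 c2 c3 by auto
      next
        case False
        then show ?thesis using concave_gen[OF lH, where n=n and a="card (A \<inter> B)" and a'="card B" and b'="card A" and b="card (A \<union> B)"]
          cu c1 c2 c3 by auto
      qed
      moreover have "A \<union> B \<subseteq> X" "A \<inter> B \<subseteq> X" using AB by auto
      ultimately show "val_join v1 v2 (A \<union> B) + val_join v1 v2 (A \<inter> B) \<le> val_join v1 v2 A + val_join v1 v2 B"
        using HJ AB by simp
    qed
  next
    show "symmetric_val X (val_join v1 v2)"
      unfolding symmetric_val_def using HJ by auto
  qed
qed

end
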